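(* Consider the fixed-share algorithm with time-varying parameters, with $\eta_t=\sqrt{\ln(dt)/t}$ for $t\ge3$, $\eta_0=\eta_1=\eta_2=\eta_3$, and $\alpha_t=1/t$ for $t\ge1$. Then for all $T\ge3$ and all loss vectors $\ell_1,\dots,\ell_T\in[0,1]^d$, \[ \max_{1\le r\le s\le T}\Big\{\sum_{t=r}^s\hat p_t^\top\ell_t-\min_{q\in\Delta_d}\sum_{t=r}^sq^\top\ell_t\Big\}\le\sqrt{2T\ln(dT)}+\sqrt{3\ln(3d)}. \]
   Context: Let $d\ge1$ and $\Delta_d=\{q\in[0,1]^d:\sum_{i=1}^d q_i=1\}$. The fixed-share algorithm with time-varying parameters uses sequences $(\eta_t)_{t\ge1}$ of positive numbers and $(\alpha_t)_{t\ge1}$ in $(0,1]$, with the convention $\eta_0=\eta_1$. It sets $\hat p_1=(1/d,\dots,1/d)$; at each round $t\ge1$ it predicts $\hat p_t\in\Delta_d$, observes an arbitrary loss vector $\ell_t=(\ell_{1,t},\dots,\ell_{d,t})\in[0,1]^d$, suffers loss $\hat p_t^\top\ell_t$, and then sets, for $j=1,\dots,d$, $v_{j,t+1}=\hat p_{j,t}^{\,\eta_t/\eta_{t-1}}e^{-\eta_t\ell_{j,t}}\big/\sum_{i=1}^d\hat p_{i,t}^{\,\eta_t/\eta_{t-1}}e^{-\eta_t\ell_{i,t}}$ and $\hat p_{j,t+1}=\alpha_t/d+(1-\alpha_t)v_{j,t+1}$. (The maximum ranges over integers $r,s$.) *)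

theory Defs
  imports "HOL-Analysis.Analysis"
begin

text \<open>Experts are indexed by j < d, rounds by t \<ge> 1; the loss of expert j at round t is l t j.
  fixed_share d eta alpha l t j is the weight \<hat>p_{j,t} (defined for t \<ge> 1; t = 0 is a dummy).
  The convention eta_0 = eta_1 is built into the parameter sequence passed in.\<close>

fun fixed_share :: "nat \<Rightarrow> (nat \<Rightarrow> real) \<Rightarrow> (nat \<Rightarrow> real) \<Rightarrow> (nat \<Rightarrow> nat \<Rightarrow> real) \<Rightarrow> nat \<Rightarrow> nat \<Rightarrow> real"
where
  "fixed_share d eta alpha l 0 = (\<lambda>j. 1 / real d)"
| "fixed_share d eta alpha l (Suc 0) = (\<lambda>j. 1 / real d)"
| "fixed_share d eta alpha l (Suc (Suc t)) =
     (let p = fixed_share d eta alpha l (Suc t);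
          w = (\<lambda>j. p j powr (eta (Suc t) / eta t) * exp (- eta (Suc t) * l (Suc t) j));
          Z = (\<Sum>i<d. w i)
      in (\<lambda>j. alpha (Suc t) / real d + (1 - alpha (Suc t)) * (w j / Z)))"

definition prob_simplex :: "nat \<Rightarrow> (nat \<Rightarrow> real) set" where
  "prob_simplex d = {q. (\<forall>j<d. 0 \<le> q j \<and> q j \<le> 1) \<and> (\<Sum>j<d. q j) = 1}"

definition eta_thm :: "nat \<Rightarrow> nat \<Rightarrow> real" where
  "eta_thm d t = (if t \<le> 3 then sqrt (ln (real d * 3) / 3) else sqrt (ln (real d * real t) / real t))"

definition alpha_thm :: "nat \<Rightarrow> real" where
  "alpha_thm t = 1 / real t"

end

theory Submission
  imports Defs "HOL-Probability.Hoeffding"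
begin

lemma holder_pow:
  fixes a :: "nat \<Rightarrow> real" and d :: nat and \<rho> :: real
  assumes d: "d \<ge> 1" and a: "\<And>i. i < d \<Longrightarrow> a i > 0" and r: "0 < \<rho>" "\<rho> \<le> 1"
  shows "(\<Sum>i<d. a i powr \<rho>) \<le> (\<Sum>i<d. a i) powr \<rho> * real d powr (1 - \<rho>)"
proof -
  define S where "S = (\<Sum>i<d. a i)"
  have S: "S > 0" unfolding S_def using d a by (intro sum_pos) (auto simp: lessThan_empty_iff)
  have dp: "real d > 0" using d by simp
  have each: "(a i / S) powr \<rho> * (1 / real d) powr (1 - \<rho>) \<le> \<rho> * (a i / S) + (1 - \<rho>) * (1 / real d)"
    if "i < d" for i
    using Youngs_inequality_0[of \<rho> "1 - \<rho>" "a i / S" "1 / real d"] a[OF that] S dp r by auto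
  have "(\<Sum>i<d. (a i / S) powr \<rho> * (1 / real d) powr (1 - \<rho>)) \<le> (\<Sum>i<d. \<rho> * (a i / S) + (1 - \<rho>) * (1 / real d))"
    by (intro sum_mono each) auto
  also have "\<dots> = \<rho> * (S / S) + (1 - \<rho>)"
    using dp by (simp add: sum.distrib sum_distrib_left[symmetric] sum_divide_distrib[symmetric] S_def)
  also have "\<dots> = 1" using S by simp
  finally have le1: "(\<Sum>i<d. (a i / S) powr \<rho> * (1 / real d) powr (1 - \<rho>)) \<le> 1" .
  have eq: "(a i / S) powr \<rho> * (1 / real d) powr (1 - \<rho>) = a i powr \<rho> / (S powr \<rho> * real d powr (1 - \<rho>))" if "i < d" for i
    using a[OF that] S dp by (simp add: powr_divide)
  have "(\<Sum>i<d. a i powr \<rho> / (S powr \<rho> * real d powr (1 - \<rho>))) \<le> 1"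
    using le1 eq by simp
  hence "(\<Sum>i<d. a i powr \<rho>) / (S powr \<rho> * real d powr (1 - \<rho>)) \<le> 1"
    by (simp add: sum_divide_distrib)
  moreover have "S powr \<rho> * real d powr (1 - \<rho>) > 0" using S dp by simp
  ultimately show ?thesis unfolding S_def[symmetric]
    by (simp add: pos_divide_le_eq)
qed

lemma exp_chord:
  fixes \<eta> x :: real
  assumes "\<eta> \<ge> 0" "0 \<le> x" "x \<le> 1"
  shows "exp (- \<eta> * x) \<le> 1 - x * (1 - exp (- \<eta>))"
proof -
  have "exp (\<eta> * ((1 - x) *\<^sub>R 0 + x *\<^sub>R (-1))) \<le> (1 - x) * exp (\<eta> * 0) + x * exp (\<eta> * (-1))"
    using convex_onD[OF convex_on_exp[OF assms(1)], of x 0 "-1"] assms by simp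
  thus ?thesis by (simp add: algebra_simps)
qed

lemma hoeff_fin:
  fixes p l :: "nat \<Rightarrow> real" and d :: nat and \<eta> :: real
  assumes d: "d \<ge> 1" and p: "\<And>i. i < d \<Longrightarrow> p i \<ge> 0" and ps: "(\<Sum>i<d. p i) = 1"
    and l: "\<And>i. i < d \<Longrightarrow> 0 \<le> l i \<and> l i \<le> 1" and e: "\<eta> > 0"
  shows "ln (\<Sum>i<d. p i * exp (- \<eta> * l i)) \<le> - \<eta> * (\<Sum>i<d. p i * l i) + \<eta>^2 / 8"
proof -
  define m where "m = (\<Sum>i<d. p i * l i)"
  have m1: "m \<le> 1"
  proof -
    have "m \<le> (\<Sum>i<d. p i * 1)" unfolding m_def using p l by (intro sum_mono mult_left_mono) auto
    thus ?thesis using ps by simp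
  qed
  have m0: "m \<ge> 0" unfolding m_def using p l by (intro sum_nonneg) auto
  have "(\<Sum>i<d. p i * exp (- \<eta> * l i)) \<ge> (\<Sum>i<d. p i * exp (- \<eta>))"
    using p l e by (intro sum_mono mult_left_mono) auto
  hence Spos: "(\<Sum>i<d. p i * exp (- \<eta> * l i)) > 0"
    using ps by (simp add: sum_distrib_right[symmetric]) (meson exp_gt_zero order_less_le_trans)
  have "(\<Sum>i<d. p i * exp (- \<eta> * l i)) \<le> (\<Sum>i<d. p i * (1 - l i * (1 - exp (- \<eta>))))"
    using p l e exp_chord by (intro sum_mono mult_left_mono) auto
  also have "\<dots> = 1 - m * (1 - exp (- \<eta>))"
  proof -
    have "(\<Sum>i<d. p i * (1 - l i * (1 - exp (- \<eta>)))) = (\<Sum>i<d. p i - (1 - exp (- \<eta>)) * (p i * l i))"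
      by (intro sum.cong) (auto simp: algebra_simps)
    also have "\<dots> = (\<Sum>i<d. p i) - (1 - exp (- \<eta>)) * m"
      by (simp add: sum_subtractf sum_distrib_left m_def)
    finally show ?thesis using ps by (simp add: algebra_simps)
  qed
  also have "\<dots> = exp (- \<eta>) * (1 + (1 - m) * (exp \<eta> - 1))"
    by (simp add: algebra_simps exp_minus field_simps)
  finally have le: "(\<Sum>i<d. p i * exp (- \<eta> * l i)) \<le> exp (- \<eta>) * (1 + (1 - m) * (exp \<eta> - 1))" .
  have pos2: "1 + (1 - m) * (exp \<eta> - 1) > 0"
    using m1 e by (smt (verit) mult_nonneg_nonneg one_le_exp_iff)
  have "ln (\<Sum>i<d. p i * exp (- \<eta> * l i)) \<le> ln (exp (- \<eta>) * (1 + (1 - m) * (exp \<eta> - 1)))"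
    using le Spos by simp
  also have "\<dots> = - \<eta> + ln (1 + (1 - m) * (exp \<eta> - 1))"
    using pos2 by (simp add: ln_mult)
  also have "\<dots> \<le> - \<eta> + (\<eta> * (1 - m) + \<eta>^2 / 8)"
    using Hoeffdings_lemma_aux[of \<eta> "1 - m"] e m1 by simp
  finally show ?thesis unfolding m_def[symmetric] by (simp add: algebra_simps)
qed

lemma round_generic:
  fixes p lt :: "nat \<Rightarrow> real" and d k :: nat and \<eta> \<eta>' :: real
  assumes d: "d \<ge> 1" and p: "\<And>i. i < d \<Longrightarrow> p i > 0" and ps: "(\<Sum>i<d. p i) = 1"
    and l: "\<And>i. i < d \<Longrightarrow> 0 \<le> lt i \<and> lt i \<le> 1" and e: "\<eta> > 0" "\<eta> \<le> \<eta>'" and k: "k < d"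
  defines "W \<equiv> (\<lambda>j. p j powr (\<eta> / \<eta>') * exp (- \<eta> * lt j))"
  shows "(\<Sum>i<d. p i * lt i) - lt k \<le>
          (1 / \<eta>) * ln (real d * (W k / (\<Sum>i<d. W i))) - (1 / \<eta>') * ln (real d * p k) + \<eta>' / 8"
proof -
  define \<rho> where "\<rho> = \<eta> / \<eta>'"
  have e': "\<eta>' > 0" using e by simp
  have r: "0 < \<rho>" "\<rho> \<le> 1" using e e' by (auto simp: \<rho>_def)
  define a where "a = (\<lambda>i. p i * exp (- \<eta>' * lt i))"
  have apos: "a i > 0" if "i < d" for i using p[OF that] by (simp add: a_def)
  have Wa: "W i = a i powr \<rho>" if "i < d" for i
  proof -
    have "a i powr \<rho> = p i powr \<rho> * exp (- \<eta>' * lt i) powr \<rho>"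
      using p[OF that] by (simp add: a_def powr_mult)
    also have "exp (- \<eta>' * lt i) powr \<rho> = exp (- \<eta> * lt i)"
      using e' by (simp add: powr_def \<rho>_def)
    finally show ?thesis by (simp add: W_def \<rho>_def)
  qed
  have Wpos: "W i > 0" if "i < d" for i using Wa[OF that] apos[OF that] by simp
  define Z where "Z = (\<Sum>i<d. W i)"
  define S where "S = (\<Sum>i<d. a i)"
  have ne: "{..<d} \<noteq> {}" using d by (auto simp: lessThan_empty_iff)
  have Zpos: "Z > 0" unfolding Z_def using Wpos ne by (intro sum_pos) auto
  have Spos: "S > 0" unfolding S_def using apos ne by (intro sum_pos) auto
  have "Z = (\<Sum>i<d. a i powr \<rho>)" unfolding Z_def using Wa by (intro sum.cong) auto
  also have "\<dots> \<le> S powr \<rho> * real d powr (1 - \<rho>)"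
    unfolding S_def using holder_pow[OF d apos r] by simp
  finally have "ln Z \<le> ln (S powr \<rho> * real d powr (1 - \<rho>))" using Zpos by simp
  also have "\<dots> = \<rho> * ln S + (1 - \<rho>) * ln (real d)"
    using Spos d by (simp add: ln_mult ln_powr)
  finally have lnZ: "ln Z \<le> \<rho> * ln S + (1 - \<rho>) * ln (real d)" .
  have lnS: "ln S \<le> - \<eta>' * (\<Sum>i<d. p i * lt i) + \<eta>'^2 / 8"
    unfolding S_def a_def using hoeff_fin[OF d _ ps l e'] p by (simp add: less_imp_le)
  have lnW: "ln (W k) = \<rho> * ln (p k) - \<eta> * lt k"
    using p[OF k] by (simp add: W_def ln_mult ln_powr \<rho>_def)
  have lnv: "ln (real d * (W k / Z)) = ln (real d) + \<rho> * ln (p k) - \<eta> * lt k - ln Z"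
    using d Wpos[OF k] Zpos lnW by (simp add: ln_mult ln_div)
  have c1: "(1 / \<eta>) * \<rho> = 1 / \<eta>'" using e e' by (simp add: \<rho>_def)
  have "(1 / \<eta>) * ln Z \<le> (1 / \<eta>) * (\<rho> * ln S + (1 - \<rho>) * ln (real d))"
    using lnZ e by (intro mult_left_mono) auto
  also have "\<dots> = ((1 / \<eta>) * \<rho>) * ln S + (1 / \<eta> - (1 / \<eta>) * \<rho>) * ln (real d)"
    by (simp add: algebra_simps)
  also have "\<dots> = (1 / \<eta>') * ln S + (1 / \<eta> - 1 / \<eta>') * ln (real d)"
    by (simp only: c1)
  finally have A: "(1 / \<eta>) * ln Z \<le> (1 / \<eta>') * ln S + (1 / \<eta> - 1 / \<eta>') * ln (real d)" .
  have "(1 / \<eta>') * ln S \<le> (1 / \<eta>') * (- \<eta>' * (\<Sum>i<d. p i * lt i) + \<eta>'^2 / 8)"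
    using lnS e' by (intro mult_left_mono) auto
  also have "\<dots> = - (\<Sum>i<d. p i * lt i) + \<eta>' / 8"
    using e' by (simp add: field_simps power2_eq_square)
  finally have B: "(1 / \<eta>') * ln S \<le> - (\<Sum>i<d. p i * lt i) + \<eta>' / 8" .
  have C: "(1 / \<eta>) * ln (real d * (W k / Z)) = (1 / \<eta>) * ln (real d) + (1 / \<eta>') * ln (p k) - lt k - (1 / \<eta>) * ln Z"
    unfolding lnv using e c1[symmetric] by (simp add: algebra_simps)
  have D: "ln (real d * p k) = ln (real d) + ln (p k)" using d p[OF k] by (simp add: ln_mult)
  show ?thesis using A B unfolding Z_def[symmetric] C D distrib_left left_diff_distrib by linarith
qed

lemma ln_ratio_mono:
  fixes d n :: nat
  assumes "d \<ge> 1" "n \<ge> 3"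
  shows "ln (real d * real (Suc n)) / real (Suc n) \<le> ln (real d * real n) / real n"
proof -
  have n0: "real n > 0" using assms by simp
  have dn: "real d * real n \<ge> 3" using mult_mono[of 1 "real d" 3 "real n"] assms by simp
  hence "ln (real d * real n) \<ge> ln 3" by simp
  moreover have "ln (3::real) \<ge> 1" using exp_le by (subst ln_ge_iff) auto
  ultimately have L1: "ln (real d * real n) \<ge> 1" by simp
  have eq: "real d * real (Suc n) = (real d * real n) * (1 + 1 / real n)"
    using n0 by (simp add: field_simps)
  have "ln (real d * real (Suc n)) = ln (real d * real n) + ln (1 + 1 / real n)"
    proof -
    have "1 / real n > 0" using n0 by simp
    hence "0 < 1 + 1 / real n" by linarith
    thus ?thesis unfolding eq using dn by (intro ln_mult_pos) auto
  qed
  also have "ln (1 + 1 / real n) \<le> 1 / real n" using n0 by (intro ln_add_one_self_le_self) simp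
  finally have "ln (real d * real (Suc n)) \<le> ln (real d * real n) + 1 / real n" by simp
  hence "real n * ln (real d * real (Suc n)) \<le> real n * (ln (real d * real n) + 1 / real n)"
    using n0 by (intro mult_left_mono) auto
  also have "\<dots> = real n * ln (real d * real n) + 1" using n0 by (simp add: algebra_simps)
  also have "\<dots> \<le> real (Suc n) * ln (real d * real n)" using L1 by (simp add: algebra_simps)
  finally have "real n * ln (real d * real (Suc n)) \<le> real (Suc n) * ln (real d * real n)" .
  thus ?thesis using n0 by (simp add: divide_le_eq le_divide_eq mult.commute)
qed

lemma sqrt_div_aux: "x > 0 \<Longrightarrow> a > 0 \<Longrightarrow> (1 / sqrt (x / a)) * x = sqrt (a * x)"
proof -
  assume x: "x > 0" and a: "a > 0"
  have "sqrt (x / a) * sqrt (a * x) = sqrt (x * x)" using a by (simp add: real_sqrt_mult[symmetric])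
  also have "\<dots> = x" using x by simp
  finally have "sqrt (x / a) * sqrt (a * x) = x" .
  moreover have "sqrt (x / a) > 0" using x a by simp
  ultimately show ?thesis by (simp add: divide_eq_eq mult.commute)
qed

lemma inv_sqrt_step: "n \<ge> 1 \<Longrightarrow> 1 / sqrt (real n) \<le> 2 * sqrt (real n) - 2 * sqrt (real n - 1)"
proof -
  assume n: "n \<ge> 1"
  define a where "a = sqrt (real n)"
  define b where "b = sqrt (real n - 1)"
  have a0: "a > 0" using n by (simp add: a_def)
  have b0: "b \<ge> 0" using n by (simp add: b_def)
  have a2: "a * a = real n" using n by (simp add: a_def)
  have b2: "b * b = real n - 1" using n by (simp add: b_def)
  have "0 \<le> (a - b) * (a - b)" by simp
  hence "2 * a * b \<le> a * a + b * b" by (simp add: algebra_simps)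
  hence "1 \<le> a * (2 * a - 2 * b)" using a2 b2 by (simp add: algebra_simps)
  hence "1 / a \<le> 2 * a - 2 * b" using a0 by (simp add: divide_le_eq mult.commute)
  thus ?thesis by (simp add: a_def b_def)
qed

lemma final_arith:
  fixes T :: nat and L :: real
  assumes T: "T \<ge> 3" and L: "L \<ge> 0"
  shows "sqrt (real T * L) + sqrt L * (1 + 2 * sqrt (real T - 1)) / 8 \<le> sqrt (2 * real T * L)"
proof -
  define a where "a = sqrt (real T)"
  define q where "q = sqrt L"
  have q0: "q \<ge> 0" using L by (simp add: q_def)
  have a17: "a \<ge> 1.7"
  proof -
    have "sqrt (1.7 ^ 2) \<le> sqrt (real T)" using T by (intro real_sqrt_le_mono) (simp add: power2_eq_square)
    thus ?thesis by (simp add: a_def)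
  qed
  have s2: "sqrt 2 \<ge> (1.41::real)"
  proof -
    have "sqrt (1.41 ^ 2) \<le> sqrt (2::real)" by (intro real_sqrt_le_mono) (simp add: power2_eq_square)
    thus ?thesis by simp
  qed
  have b: "sqrt (real T - 1) \<le> a" unfolding a_def by (intro real_sqrt_le_mono) simp
  have key: "a + (1 + 2 * a) / 8 \<le> sqrt 2 * a"
  proof -
    have h: "sqrt 2 * a \<ge> (141 / 100) * a" using s2 a17 by (intro mult_right_mono) auto
    have h2: "a \<ge> 17 / 10" using a17 by simp
    have e: "a + (1 + 2 * a) / 8 = (5 / 4) * a + 1 / 8" by (simp add: field_simps)
    show ?thesis unfolding e using h h2 by linarith
  qed
  have "sqrt (real T * L) + sqrt L * (1 + 2 * sqrt (real T - 1)) / 8 \<le> a * q + q * (1 + 2 * a) / 8"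
    using b q0 by (simp add: a_def q_def real_sqrt_mult mult_left_mono divide_right_mono)
  also have "\<dots> = q * (a + (1 + 2 * a) / 8)" by (simp add: algebra_simps)
  also have "\<dots> \<le> q * (sqrt 2 * a)" using key q0 by (intro mult_left_mono) auto
  also have "\<dots> = sqrt (2 * real T * L)" by (simp add: a_def q_def real_sqrt_mult)
  finally show ?thesis .
qed

context
  fixes d :: nat and l :: "nat \<Rightarrow> nat \<Rightarrow> real"
  assumes d1: "d \<ge> 1"
begin

abbreviation "E \<equiv> eta_thm d"
abbreviation "P \<equiv> fixed_share d (eta_thm d) alpha_thm l"

lemma eta_pos: "E t > 0"
proof -
  have a: "real d * 3 > 1" using d1 by simp
  have "real d * real t > 1" if "t > 3"
  proof -
    have "real d * real t \<ge> 1 * real t" using d1 by (intro mult_right_mono) auto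
    moreover have "real t > 1" using that by simp
    ultimately show ?thesis by linarith
  qed
  thus ?thesis using a by (auto simp: eta_thm_def)
qed

lemma E_formula: "t \<ge> 3 \<Longrightarrow> E t = sqrt (ln (real d * real t) / real t)"
  by (cases "t = 3") (auto simp: eta_thm_def)

lemma eta_mono: "t \<ge> 1 \<Longrightarrow> E t \<le> E (t - 1)"
proof -
  assume t: "t \<ge> 1"
  show ?thesis
  proof (cases "t \<le> 3")
    case True
    have "t - 1 \<le> 3" using True by simp
    thus ?thesis using True by (simp add: eta_thm_def)
  next
    case False
    then obtain n where n: "t = Suc n" "n \<ge> 3" by (cases t) auto
    have "ln (real d * real (Suc n)) / real (Suc n) \<le> ln (real d * real n) / real n"
      using ln_ratio_mono[OF d1 n(2)] .
    hence "sqrt (ln (real d * real (Suc n)) / real (Suc n)) \<le> sqrt (ln (real d * real n) / real n)"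
      by (rule real_sqrt_le_mono)
    thus ?thesis using n E_formula[of n] E_formula[of "Suc n"] by simp
  qed
qed

definition W :: "nat \<Rightarrow> nat \<Rightarrow> real" where
  "W t j = P t j powr (E t / E (t - 1)) * exp (- E t * l t j)"

lemma P_one: "P (Suc 0) j = 1 / real d" by simp

lemma P_step: "t \<ge> 1 \<Longrightarrow> P (Suc t) j = alpha_thm t / real d + (1 - alpha_thm t) * (W t j / (\<Sum>i<d. W t i))"
  by (cases t) (auto simp: W_def Let_def)

lemma P_two: "P (Suc (Suc 0)) j = 1 / real d"
  using P_step[of 1 j] by (simp add: alpha_thm_def)

lemma P_pos_sum: "t \<ge> 1 \<Longrightarrow> (\<forall>j<d. P t j > 0) \<and> (\<Sum>j<d. P t j) = 1"
proof (induction t rule: nat_induct_at_least)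
  case base
  then show ?case using d1 by simp
next
  case (Suc n)
  have ne: "{..<d} \<noteq> {}" using d1 by (auto simp: lessThan_empty_iff)
  have Wp: "W n j > 0" if "j < d" for j using Suc.IH that by (auto simp: W_def powr_gt_zero intro!: mult_pos_pos)
  have Zp: "(\<Sum>i<d. W n i) > 0" using Wp ne by (intro sum_pos) auto
  have a: "0 < alpha_thm n" "alpha_thm n \<le> 1" using Suc.hyps by (auto simp: alpha_thm_def)
  have pos: "P (Suc n) j > 0" if "j < d" for j
    unfolding P_step[OF Suc.hyps] using a Wp[OF that] Zp d1
    by (intro add_pos_nonneg mult_nonneg_nonneg divide_nonneg_pos) auto
  define Z where "Z = (\<Sum>i<d. W n i)"
  have "(\<Sum>j<d. P (Suc n) j) = (\<Sum>j<d. alpha_thm n / real d + (1 - alpha_thm n) * (W n j / Z))"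
    unfolding P_step[OF Suc.hyps] Z_def by simp
  also have "\<dots> = (\<Sum>j<d. alpha_thm n / real d) + (\<Sum>j<d. (1 - alpha_thm n) * (W n j / Z))"
    by (rule sum.distrib)
  also have "(\<Sum>j<d. (1 - alpha_thm n) * (W n j / Z)) = (1 - alpha_thm n) * ((\<Sum>j<d. W n j) / Z)"
    by (simp only: sum_distrib_left[symmetric] sum_divide_distrib[symmetric])
  also have "(\<Sum>j<d. W n j) / Z = 1" using Zp unfolding Z_def by simp
  also have "(\<Sum>j<d. alpha_thm n / real d) = alpha_thm n" using d1 by simp
  finally have "(\<Sum>j<d. P (Suc n) j) = 1" by simp
  thus ?case using pos by simp
qed

lemma P_le1: "t \<ge> 1 \<Longrightarrow> j < d \<Longrightarrow> P t j \<le> 1"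
proof -
  assume t: "t \<ge> 1" and j: "j < d"
  have "P t j \<le> (\<Sum>i<d. P t i)"
    using P_pos_sum[OF t] j by (intro member_le_sum) (auto simp: less_imp_le)
  thus ?thesis using P_pos_sum[OF t] by simp
qed

lemma P_lower: "t \<ge> 2 \<Longrightarrow> k < d \<Longrightarrow> P t k \<ge> 1 / (real d * real (t - 1))"
proof -
  assume t: "t \<ge> 2" and k: "k < d"
  obtain n where n: "t = Suc n" "n \<ge> 1" using t by (cases t) auto
  have ne: "{..<d} \<noteq> {}" using d1 by (auto simp: lessThan_empty_iff)
  have Wp: "W n j > 0" if "j < d" for j using P_pos_sum[OF n(2)] that by (auto simp: W_def powr_gt_zero intro!: mult_pos_pos)
  have Zp: "(\<Sum>i<d. W n i) > 0" using Wp ne by (intro sum_pos) auto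
  have a: "0 < alpha_thm n" "alpha_thm n \<le> 1" using n by (auto simp: alpha_thm_def)
  have "(1 - alpha_thm n) * (W n k / (\<Sum>i<d. W n i)) \<ge> 0"
    using a Wp[OF k] Zp by (intro mult_nonneg_nonneg divide_nonneg_pos) auto
  hence "P t k \<ge> alpha_thm n / real d" unfolding n(1) P_step[OF n(2)] by simp
  thus ?thesis using n by (simp add: alpha_thm_def mult.commute)
qed


definition delta :: "nat \<Rightarrow> real" where
  "delta t = (if t = 1 then ln (real d) else ln (real t) - ln (real t - 1))"

lemma v_bound:
  assumes t: "t \<ge> 1" and k: "k < d"
  shows "ln (real d * (W t k / (\<Sum>i<d. W t i))) \<le> ln (real d * P (Suc t) k) + delta t"
proof -
  have ne: "{..<d} \<noteq> {}" using d1 by (auto simp: lessThan_empty_iff)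
  have Wp: "W t j > 0" if "j < d" for j using P_pos_sum[OF t] that by (auto simp: W_def powr_gt_zero intro!: mult_pos_pos)
  have Zp: "(\<Sum>i<d. W t i) > 0" using Wp ne by (intro sum_pos) auto
  define v where "v = W t k / (\<Sum>i<d. W t i)"
  have vp: "v > 0" using Wp[OF k] Zp by (simp add: v_def)
  have "W t k \<le> (\<Sum>i<d. W t i)" using Wp k by (intro member_le_sum) (auto simp: less_imp_le)
  hence v1: "v \<le> 1" using Zp by (simp add: v_def)
  have dp: "real d > 0" using d1 by simp
  show ?thesis
  proof (cases "t = 1")
    case True
    have "ln (real d * v) = ln (real d) + ln v" using dp vp by (simp add: ln_mult_pos)
    also have "ln v \<le> 0" using vp v1 by simp
    finally have "ln (real d * v) \<le> ln (real d)" by simp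
    moreover have "P (Suc t) k = 1 / real d" using True P_two by simp
    ultimately show ?thesis using True dp by (simp add: v_def delta_def)
  next
    case False
    hence t2: "t \<ge> 2" using t by simp
    have tp: "real t - 1 > 0" using t2 by simp
    have "P (Suc t) k = alpha_thm t / real d + (1 - alpha_thm t) * v"
      unfolding v_def by (rule P_step[OF t])
    moreover have "alpha_thm t / real d \<ge> 0" by (simp add: alpha_thm_def)
    ultimately have "P (Suc t) k \<ge> (1 - 1 / real t) * v" by (simp add: alpha_thm_def)
    also have "1 - 1 / real t = (real t - 1) / real t" using t by (simp add: field_simps)
    finally have Pge: "P (Suc t) k \<ge> (real t - 1) / real t * v" .
    have pos: "real d * ((real t - 1) / real t * v) > 0" using dp tp vp t by simp
    have "ln (real d * ((real t - 1) / real t * v)) \<le> ln (real d * P (Suc t) k)"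
    proof -
      have mle: "real d * ((real t - 1) / real t * v) \<le> real d * P (Suc t) k"
        using Pge dp by (intro mult_left_mono) auto
      show ?thesis using pos mle by (metis ln_le_cancel_iff order_less_le_trans)
    qed
    moreover have "ln (real d * ((real t - 1) / real t * v)) = ln (real d * v) + ln (real t - 1) - ln (real t)"
      using dp tp vp t by (simp add: ln_mult_pos ln_div)
    ultimately show ?thesis using False by (simp add: v_def delta_def)
  qed
qed

lemma round_step:
  assumes t: "t \<ge> 1" and k: "k < d" and lb: "\<And>j. j < d \<Longrightarrow> 0 \<le> l t j \<and> l t j \<le> 1"
  shows "(\<Sum>j<d. P t j * l t j) - l t k \<le> (1 / E t) * ln (real d * P (Suc t) k)
           - (1 / E (t - 1)) * ln (real d * P t k) + (1 / E t) * delta t + E (t - 1) / 8"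
proof -
  have RG: "(\<Sum>j<d. P t j * l t j) - l t k \<le> (1 / E t) * ln (real d * (W t k / (\<Sum>i<d. W t i)))
           - (1 / E (t - 1)) * ln (real d * P t k) + E (t - 1) / 8"
    using round_generic[OF d1 _ _ lb eta_pos eta_mono[OF t] k, of "P t"] P_pos_sum[OF t]
    by (simp add: W_def[abs_def])
  have "(1 / E t) * ln (real d * (W t k / (\<Sum>i<d. W t i))) \<le> (1 / E t) * (ln (real d * P (Suc t) k) + delta t)"
    using v_bound[OF t k] eta_pos[of t] by (intro mult_left_mono) auto
  thus ?thesis using RG by (simp add: algebra_simps)
qed


lemma c_mono: "t \<ge> 1 \<Longrightarrow> 1 / E (t - 1) \<le> 1 / E t"
  using eta_mono[of t] eta_pos[of t] eta_pos[of "t - 1"] by (simp add: frac_le)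

lemma K: "n \<ge> 2 \<Longrightarrow> (1 / E (n - 1)) * ln (real n - 1) + (1 / E n) * delta n \<le> (1 / E n) * ln (real n)"
proof -
  assume n: "n \<ge> 2"
  have "ln (real n - 1) \<ge> 0" using n by simp
  hence "(1 / E (n - 1)) * ln (real n - 1) \<le> (1 / E n) * ln (real n - 1)"
    using c_mono[of n] n by (intro mult_right_mono) auto
  thus ?thesis using n by (simp add: delta_def algebra_simps)
qed

lemma lowerln: "r \<ge> 2 \<Longrightarrow> k < d \<Longrightarrow> - ln (real d * P r k) \<le> ln (real r - 1)"
proof -
  assume r: "r \<ge> 2" and k: "k < d"
  have rp: "real r - 1 > 0" using r by simp
  have dp: "real d > 0" using d1 by simp
  have "P r k \<ge> 1 / (real d * (real r - 1))" using P_lower[OF r k] r by (simp add: of_nat_diff)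
  hence "real d * P r k \<ge> real d * (1 / (real d * (real r - 1)))" using dp by (intro mult_left_mono) auto
  hence ge: "real d * P r k \<ge> 1 / (real r - 1)" using dp by simp
  have "ln (1 / (real r - 1)) \<le> ln (real d * P r k)"
    using ge rp by (metis ln_le_cancel_iff order_less_le_trans zero_less_divide_1_iff)
  thus ?thesis using rp by (simp add: ln_div)
qed

lemma telescope:
  assumes r: "r \<ge> 1" and k: "k < d" and rs: "r \<le> s" and sT: "s \<le> T"
    and lb: "\<And>t j. 1 \<le> t \<Longrightarrow> t \<le> T \<Longrightarrow> j < d \<Longrightarrow> 0 \<le> l t j \<and> l t j \<le> 1"
  shows "(\<Sum>t=r..s. (\<Sum>j<d. P t j * l t j) - l t k) \<le> (1 / E s) * ln (real d * P (Suc s) k)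
          + (1 / E s) * ln (real s) + (if r = 1 then (1 / E 1) * ln (real d) else 0) + (\<Sum>t=r..s. E (t - 1)) / 8"
  using rs sT
proof (induction s rule: dec_induct)
  case base
  have st: "(\<Sum>j<d. P r j * l r j) - l r k \<le> (1 / E r) * ln (real d * P (Suc r) k)
           - (1 / E (r - 1)) * ln (real d * P r k) + (1 / E r) * delta r + E (r - 1) / 8"
    using round_step[OF r k] lb r base by auto
  show ?case
  proof (cases "r = 1")
    case True
    have "P r k = 1 / real d" using True by simp
    hence "ln (real d * P r k) = 0" using d1 by simp
    thus ?thesis using st True by (simp add: delta_def)
  next
    case False
    hence r2: "r \<ge> 2" using r by simp
    have "- (1 / E (r - 1)) * ln (real d * P r k) \<le> (1 / E (r - 1)) * ln (real r - 1)"
      using lowerln[OF r2 k] eta_pos[of "r - 1"] mult_left_mono[of "- ln (real d * P r k)" "ln (real r - 1)" "1 / E (r - 1)"]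
      by simp
    thus ?thesis using st K[OF r2] False by simp
  qed
next
  case (step n)
  have n1: "Suc n \<ge> 1" by simp
  have st: "(\<Sum>j<d. P (Suc n) j * l (Suc n) j) - l (Suc n) k \<le> (1 / E (Suc n)) * ln (real d * P (Suc (Suc n)) k)
           - (1 / E n) * ln (real d * P (Suc n) k) + (1 / E (Suc n)) * delta (Suc n) + E n / 8"
  proof -
    have lbn: "\<And>j. j < d \<Longrightarrow> 0 \<le> l (Suc n) j \<and> l (Suc n) j \<le> 1" using lb step.prems by auto
    show ?thesis using round_step[OF n1 k lbn] by simp
  qed
  have IH: "(\<Sum>t=r..n. (\<Sum>j<d. P t j * l t j) - l t k) \<le> (1 / E n) * ln (real d * P (Suc n) k)
          + (1 / E n) * ln (real n) + (if r = 1 then (1 / E 1) * ln (real d) else 0) + (\<Sum>t=r..n. E (t - 1)) / 8"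
    using step.IH step.prems step.hyps by simp
  have KK: "(1 / E n) * ln (real n) + (1 / E (Suc n)) * delta (Suc n) \<le> (1 / E (Suc n)) * ln (real (Suc n))"
    using K[of "Suc n"] step.hyps r by simp
  have S1: "(\<Sum>t=r..Suc n. (\<Sum>j<d. P t j * l t j) - l t k) = (\<Sum>t=r..n. (\<Sum>j<d. P t j * l t j) - l t k)
     + ((\<Sum>j<d. P (Suc n) j * l (Suc n) j) - l (Suc n) k)" using step.hyps by simp
  have S2: "(\<Sum>t=r..Suc n. E (t - 1)) = (\<Sum>t=r..n. E (t - 1)) + E n" using step.hyps by simp
  show ?case unfolding S1 S2 add_divide_distrib using IH st KK by linarith
qed


lemma bound_A:
  assumes s: "1 \<le> s" "s \<le> T" and T: "T \<ge> 3"
  shows "(1 / E s) * (ln (real d) + ln (real s)) \<le> sqrt (real T * ln (real d * real T))"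
proof -
  have dp: "real d \<ge> 1" using d1 by simp
  have ln_eq: "ln (real d) + ln (real s) = ln (real d * real s)" using d1 s by (simp add: ln_mult_pos)
  have dT: "real d * real s \<le> real d * real T" using s by (intro mult_left_mono) auto
  show ?thesis
  proof (cases "s \<le> 3")
    case True
    define x where "x = ln (real d * 3)"
    have x0: "x > 0" using dp by (simp add: x_def)
    have "real d * real s \<le> real d * 3" using True by (intro mult_left_mono) auto
    hence le: "ln (real d * real s) \<le> x" using s d1 unfolding x_def by simp
    have Es: "E s = sqrt (x / 3)" using True by (simp add: eta_thm_def x_def)
    have "(1 / E s) * ln (real d * real s) \<le> (1 / E s) * x" using le eta_pos[of s] by (intro mult_left_mono) auto
    also have "\<dots> = sqrt (3 * x)" unfolding Es using x0 by (rule sqrt_div_aux) simp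
    also have "\<dots> \<le> sqrt (real T * ln (real d * real T))"
    proof (intro real_sqrt_le_mono mult_mono)
      have "real d * 3 \<le> real d * real T" using T by (intro mult_left_mono) auto
      thus "x \<le> ln (real d * real T)" using dp unfolding x_def by simp
    qed (use T x0 in auto)
    finally show ?thesis unfolding ln_eq .
  next
    case False
    define y where "y = ln (real d * real s)"
    have "real d * real s \<ge> 1 * 4" using False dp by (intro mult_mono) auto
    hence y0: "y > 0" by (simp add: y_def)
    have Es: "E s = sqrt (y / real s)" using False E_formula[of s] by (simp add: y_def)
    have "(1 / E s) * y = sqrt (real s * y)" unfolding Es using y0 s by (intro sqrt_div_aux) auto
    also have "\<dots> \<le> sqrt (real T * ln (real d * real T))"
    proof (intro real_sqrt_le_mono mult_mono)
      show "y \<le> ln (real d * real T)" using dT s d1 unfolding y_def by simp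
    qed (use s y0 in auto)
    finally show ?thesis unfolding ln_eq y_def .
  qed
qed

lemma bound_B: "(1 / E 1) * ln (real d) \<le> sqrt (3 * ln (3 * real d))"
proof -
  define x where "x = ln (real d * 3)"
  have dp: "real d \<ge> 1" using d1 by simp
  have x0: "x > 0" using dp by (simp add: x_def)
  have le: "ln (real d) \<le> x" using dp unfolding x_def by simp
  have E1: "E 1 = sqrt (x / 3)" by (simp add: eta_thm_def x_def)
  have "(1 / E 1) * ln (real d) \<le> (1 / E 1) * x" using le eta_pos[of 1] by (intro mult_left_mono) auto
  also have "\<dots> = sqrt (3 * x)" unfolding E1 using x0 by (rule sqrt_div_aux) simp
  finally show ?thesis by (simp add: x_def mult.commute)
qed

lemma E_le:
  assumes n: "n \<ge> 1" "n < T" and T: "T \<ge> 3"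
  shows "E n \<le> sqrt (ln (real d * real T) / real n)"
proof -
  have dp: "real d \<ge> 1" using d1 by simp
  show ?thesis
  proof (cases "n \<le> 3")
    case True
    have "real d * 3 \<le> real d * real T" using T by (intro mult_left_mono) auto
    hence l1: "ln (real d * 3) \<le> ln (real d * real T)" using dp by simp
    have l0: "ln (real d * 3) \<ge> 0" using dp by simp
    have "ln (real d * 3) / 3 \<le> ln (real d * real T) / 3" using l1 by simp
    also have "\<dots> \<le> ln (real d * real T) / real n" using l0 l1 True n by (intro divide_left_mono) auto
    finally show ?thesis using True by (simp add: eta_thm_def)
  next
    case False
    have "real d * real n \<le> real d * real T" using n by (intro mult_left_mono) auto
    hence "ln (real d * real n) \<le> ln (real d * real T)" using dp n by simp
    hence "ln (real d * real n) / real n \<le> ln (real d * real T) / real n" using n by (intro divide_right_mono) auto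
    thus ?thesis using False E_formula[of n] by simp
  qed
qed

lemma E_sum:
  assumes T: "T \<ge> 3"
  shows "1 \<le> n \<Longrightarrow> n \<le> T \<Longrightarrow> (\<Sum>t=1..n. E (t - 1)) \<le> sqrt (ln (real d * real T)) * (1 + 2 * sqrt (real n - 1))"
proof (induction n rule: nat_induct_at_least)
  case base
  have dp: "real d \<ge> 1" using d1 by simp
  have "real d * 3 \<le> real d * real T" using T by (intro mult_left_mono) auto
  hence l1: "ln (real d * 3) \<le> ln (real d * real T)" using dp by simp
  have l0: "ln (real d * 3) \<ge> 0" using dp by simp
  have "ln (real d * 3) / 3 \<le> ln (real d * real T)" using l1 l0 by simp
  hence "E 0 \<le> sqrt (ln (real d * real T))" by (simp add: eta_thm_def)
  thus ?case by simp
next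
  case (Suc n)
  have IH: "(\<Sum>t=1..n. E (t - 1)) \<le> sqrt (ln (real d * real T)) * (1 + 2 * sqrt (real n - 1))"
    using Suc by simp
  have "real d * real T \<ge> 1 * 1" using d1 T by (intro mult_mono) auto
  hence L0: "ln (real d * real T) \<ge> 0" by simp
  have "E n \<le> sqrt (ln (real d * real T) / real n)" using E_le[of n] Suc T by simp
  also have "\<dots> = sqrt (ln (real d * real T)) * (1 / sqrt (real n))" by (simp add: real_sqrt_divide)
  also have "\<dots> \<le> sqrt (ln (real d * real T)) * (2 * sqrt (real n) - 2 * sqrt (real n - 1))"
    using inv_sqrt_step[OF Suc.hyps] L0 by (intro mult_left_mono) auto
  finally have En: "E n \<le> sqrt (ln (real d * real T)) * (2 * sqrt (real n) - 2 * sqrt (real n - 1))" .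
  have "(\<Sum>t=1..Suc n. E (t - 1)) = (\<Sum>t=1..n. E (t - 1)) + E n" by simp
  also have "\<dots> \<le> sqrt (ln (real d * real T)) * (1 + 2 * sqrt (real n - 1))
                 + sqrt (ln (real d * real T)) * (2 * sqrt (real n) - 2 * sqrt (real n - 1))"
    using IH En by linarith
  also have "\<dots> = sqrt (ln (real d * real T)) * (1 + 2 * sqrt (real (Suc n) - 1))" by (simp add: algebra_simps)
  finally show ?case .
qed


lemma pair_bound:
  assumes T: "T \<ge> 3" and r: "1 \<le> r" "r \<le> s" "s \<le> T" and k: "k < d"
    and lb: "\<And>t j. 1 \<le> t \<Longrightarrow> t \<le> T \<Longrightarrow> j < d \<Longrightarrow> 0 \<le> l t j \<and> l t j \<le> 1"
  shows "(\<Sum>t=r..s. (\<Sum>j<d. P t j * l t j) - l t k)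
         \<le> sqrt (2 * real T * ln (real d * real T)) + sqrt (3 * ln (3 * real d))"
proof -
  have tel: "(\<Sum>t=r..s. (\<Sum>j<d. P t j * l t j) - l t k) \<le> (1 / E s) * ln (real d * P (Suc s) k)
          + (1 / E s) * ln (real s) + (if r = 1 then (1 / E 1) * ln (real d) else 0) + (\<Sum>t=r..s. E (t - 1)) / 8"
    using telescope[OF r(1) k r(2) r(3) lb] by blast
  have s1: "Suc s \<ge> 1" by simp
  have Pp: "P (Suc s) k > 0" using P_pos_sum[OF s1] k by simp
  have P1: "P (Suc s) k \<le> 1" using P_le1[OF s1 k] .
  have dp: "real d \<ge> 1" using d1 by simp
  have "real d * P (Suc s) k \<le> real d * 1" using P1 dp by (intro mult_left_mono) auto
  hence "ln (real d * P (Suc s) k) \<le> ln (real d)" using Pp dp by simp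
  hence a1: "(1 / E s) * ln (real d * P (Suc s) k) \<le> (1 / E s) * ln (real d)"
    using eta_pos[of s] by (intro mult_left_mono) auto
  have A: "(1 / E s) * (ln (real d) + ln (real s)) \<le> sqrt (real T * ln (real d * real T))"
    using bound_A[of s T] r T by simp
  have B: "(if r = 1 then (1 / E 1) * ln (real d) else 0) \<le> sqrt (3 * ln (3 * real d))"
  proof -
    have "3 * real d \<ge> 1" using d1 by simp
    hence "ln (3 * real d) \<ge> 0" by simp
    thus ?thesis using bound_B by simp
  qed
  have "(\<Sum>t=r..s. E (t - 1)) \<le> (\<Sum>t=1..T. E (t - 1))"
    using r eta_pos by (intro sum_mono2) (auto simp: less_imp_le)
  also have "\<dots> \<le> sqrt (ln (real d * real T)) * (1 + 2 * sqrt (real T - 1))"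
    using E_sum[OF T, of T] T by simp
  finally have C: "(\<Sum>t=r..s. E (t - 1)) / 8 \<le> sqrt (ln (real d * real T)) * (1 + 2 * sqrt (real T - 1)) / 8"
    by simp
  have "real d * real T \<ge> 1 * 1" using d1 T by (intro mult_mono) auto
  hence L0: "ln (real d * real T) \<ge> 0" by simp
  have D: "sqrt (real T * ln (real d * real T)) + sqrt (ln (real d * real T)) * (1 + 2 * sqrt (real T - 1)) / 8
           \<le> sqrt (2 * real T * ln (real d * real T))"
    using final_arith[OF T L0] .
  show ?thesis using tel a1 A B C D unfolding distrib_left by linarith
qed

end


theorem mainTheorem14:
  fixes d T :: nat and l :: "nat \<Rightarrow> nat \<Rightarrow> real"
  assumes "d \<ge> 1" and "T \<ge> 3"
    and "\<And>t j. 1 \<le> t \<Longrightarrow> t \<le> T \<Longrightarrow> j < d \<Longrightarrow> 0 \<le> l t j \<and> l t j \<le> 1"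
  shows "Max ((\<lambda>(r, s). (\<Sum>t=r..s. \<Sum>j<d. fixed_share d (eta_thm d) alpha_thm l t j * l t j)
               - (INF q\<in>prob_simplex d. \<Sum>t=r..s. \<Sum>j<d. q j * l t j))
             ` {(r, s). 1 \<le> r \<and> r \<le> s \<and> s \<le> T})
         \<le> sqrt (2 * real T * ln (real d * real T)) + sqrt (3 * ln (3 * real d))"
proof -
  define B where "B = sqrt (2 * real T * ln (real d * real T)) + sqrt (3 * ln (3 * real d))"
  define m where "m = (\<lambda>t. \<Sum>j<d. fixed_share d (eta_thm d) alpha_thm l t j * l t j)"
  define I where "I = {(r, s). 1 \<le> r \<and> r \<le> s \<and> s \<le> T}"
  have finI: "finite I" unfolding I_def
    by (rule finite_subset[of _ "{1..T} \<times> {1..T}"]) auto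
  have "(1, 1) \<in> I" unfolding I_def using assms(2) by simp
  hence neI: "I \<noteq> {}" by blast
  have unif: "(\<lambda>j. 1 / real d) \<in> prob_simplex d" using assms(1) by (auto simp: prob_simplex_def)
  have each: "(\<Sum>t=r..s. m t) - (INF q\<in>prob_simplex d. \<Sum>t=r..s. \<Sum>j<d. q j * l t j) \<le> B"
    if rs: "1 \<le> r" "r \<le> s" "s \<le> T" for r s
  proof -
    have pk: "(\<Sum>t=r..s. m t) - (\<Sum>t=r..s. l t k) \<le> B" if k: "k < d" for k
      using pair_bound[OF assms(1) assms(2) rs k assms(3)]
      by (simp add: B_def m_def sum_subtractf)
    have "(\<Sum>t=r..s. m t) - B \<le> (INF q\<in>prob_simplex d. \<Sum>t=r..s. \<Sum>j<d. q j * l t j)"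
    proof (rule cINF_greatest)
      show "prob_simplex d \<noteq> {}" using unif by blast
    next
      fix q assume q: "q \<in> prob_simplex d"
      have q0: "\<And>j. j < d \<Longrightarrow> q j \<ge> 0" and qs: "(\<Sum>j<d. q j) = 1"
        using q by (auto simp: prob_simplex_def)
      have "(\<Sum>t=r..s. m t) - B = (\<Sum>j<d. q j * ((\<Sum>t=r..s. m t) - B))"
        using qs by (simp add: sum_distrib_right[symmetric])
      also have "\<dots> \<le> (\<Sum>j<d. q j * (\<Sum>t=r..s. l t j))"
        using pk q0 by (intro sum_mono mult_left_mono) (auto simp: algebra_simps)
      also have "\<dots> = (\<Sum>t=r..s. \<Sum>j<d. q j * l t j)"
        by (simp add: sum_distrib_left sum.swap[of _ "{r..s}"])
      finally show "(\<Sum>t=r..s. m t) - B \<le> (\<Sum>t=r..s. \<Sum>j<d. q j * l t j)" .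
    qed
    thus ?thesis by simp
  qed
  have "Max ((\<lambda>(r, s). (\<Sum>t=r..s. m t) - (INF q\<in>prob_simplex d. \<Sum>t=r..s. \<Sum>j<d. q j * l t j)) ` I) \<le> B"
    using finI neI each by (intro Max.boundedI) (auto simp: I_def)
  thus ?thesis unfolding B_def m_def I_def .
qed

end
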